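(* Let $q$ be odd. For every $c\in{\mathbb F}_q$, $$\prod\Big\{c-a: a\in{\mathbb F}_q,\ \left(\tfrac{a(a+4)}{q}\right)=1\Big\}+\prod\Big\{c-b: b\in{\mathbb F}_q,\ \left(\tfrac{b(b+4)}{q}\right)=-1\Big\}=\left(\frac{c}{q}\right).$$
   Context: $\left(\frac{a}{q}\right)$ denotes the Legendre symbol on ${\mathbb F}_q$: $1$ if $a$ is a nonzero square, $-1$ if a nonsquare, $0$ if $a=0$. Empty products equal $1$. *)

theory Defs
  imports Main
begin

definition legendre_ff :: "'a::{finite,field} \<Rightarrow> int" where
  "legendre_ff a = (if a = 0 then 0 else if (\<exists>b. b ^ 2 = a) then 1 else -1)"

end

theory Submission imports "HOL-Computational_Algebra.Polynomial" Defs begin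

lemma prod_roots_eq:
  fixes A :: "'a::field set" and p :: "'a poly"
  assumes "finite A" "card A = degree p" "coeff p (degree p) = 1"
    "\<And>a. a \<in> A \<Longrightarrow> poly p a = 0"
  shows "(\<Prod>a\<in>A. [:-a,1:]) = p"
proof (rule poly_eqI_degree_lead_coeff[where n = "card A" and A = A])
  have d: "degree (\<Prod>a\<in>A. [:-a,1:]) = card A"
    by (subst degree_prod_eq_sum_degree) auto
  show "degree (\<Prod>a\<in>A. [:-a,1:]) \<le> card A" using d by simp
  show "coeff (\<Prod>a\<in>A. [:-a,1:]) (card A) = coeff p (card A)"
    using d assms(2,3) lead_coeff_prod[of "\<lambda>a. [:-a,1:]" A] by simp
  show "card A \<le> card A" by simp
  show "degree p \<le> card A" using assms by simp
  fix z assume "z \<in> A"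
  then show "poly (\<Prod>a\<in>A. [:-a,1:]) z = poly p z"
    using assms(1,4) by (auto simp: poly_prod prod_zero_iff)
qed

lemma char_zero_card:
  shows "of_nat (card (UNIV::'a set)) = (0::'a::{finite,field})"
proof -
  have "(\<Sum>x\<in>(UNIV::'a set). x) = (\<Sum>x\<in>UNIV. x + 1)"
    by (rule sum.reindex_bij_witness[of _ "\<lambda>x. x+1" "\<lambda>x. x - 1"]) auto
  then show ?thesis by (simp add: sum.distrib)
qed

lemma fermat_ff:
  fixes x :: "'a::{finite,field}"
  assumes "x \<noteq> 0"
  shows "x ^ (card (UNIV::'a set) - 1) = 1"
proof -
  let ?U = "UNIV - {0::'a}"
  have "(\<Prod>y\<in>?U. x * y) = (\<Prod>y\<in>?U. y)"
    by (rule prod.reindex_bij_witness[of _ "\<lambda>y. y / x" "\<lambda>y. x * y"]) (use assms in auto)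
  moreover have "(\<Prod>y\<in>?U. x * y) = x ^ card ?U * (\<Prod>y\<in>?U. y)"
    by (simp add: prod.distrib)
  moreover have "(\<Prod>y\<in>?U. y) \<noteq> 0" by simp
  moreover have "card ?U = card (UNIV::'a set) - 1" by (simp add: card_Diff_singleton)
  ultimately show ?thesis by simp
qed

definition mm :: "'a::{finite,field} itself \<Rightarrow> nat" where
  "mm _ = (card (UNIV::'a set) - 1) div 2"

lemma basics:
  assumes "odd (card (UNIV :: 'a::{finite,field} set))"
  shows "(2::'a) \<noteq> 0" "card (UNIV::'a set) = 2 * mm TYPE('a) + 1" "mm TYPE('a) \<ge> 1"
proof -
  let ?q = "card (UNIV::'a set)"
  have q: "?q = 2 * mm TYPE('a) + 1" using assms unfolding mm_def by presburger
  have "card {0::'a, 1} \<le> ?q" by (rule card_mono) auto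
  then have "?q \<ge> 2" by simp
  with q show "mm TYPE('a) \<ge> 1" by simp
  show "?q = 2 * mm TYPE('a) + 1" by (rule q)
  show "(2::'a) \<noteq> 0"
  proof
    assume "(2::'a) = 0"
    have "(0::'a) = of_nat ?q" using char_zero_card by simp
    also have "\<dots> = 2 * of_nat (mm TYPE('a)) + 1" by (subst q) simp
    also have "\<dots> = 1" using \<open>(2::'a) = 0\<close> by simp
    finally show False by simp
  qed
qed

lemma pm1:
  assumes "odd (card (UNIV :: 'a::{finite,field} set))" "(x::'a) \<noteq> 0"
  shows "x ^ mm TYPE('a) = 1 \<or> x ^ mm TYPE('a) = -1"
proof -
  have "(x ^ mm TYPE('a))^2 = 1"
    using fermat_ff[OF assms(2)] basics(2)[OF assms(1)]
    by (simp add: power_mult[symmetric] mult.commute)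
  then have "(x ^ mm TYPE('a) - 1) * (x ^ mm TYPE('a) + 1) = 0"
    by (simp add: algebra_simps power2_eq_square)
  then show ?thesis by (auto simp: eq_neg_iff_add_eq_0)
qed

lemma cards:
  assumes "odd (card (UNIV :: 'a::{finite,field} set))"
  shows "card {x::'a. x ^ mm TYPE('a) = 1} = mm TYPE('a)"
        "card {x::'a. x ^ mm TYPE('a) = -1} = mm TYPE('a)"
proof -
  let ?m = "mm TYPE('a)"
  have m1: "?m \<ge> 1" by (rule basics(3)[OF assms])
  have d1: "degree (monom (1::'a) ?m + [:-1:]) = ?m"
    using m1 by (subst degree_add_eq_left) (auto simp: degree_monom_eq)
  have d2: "degree (monom (1::'a) ?m + [:1:]) = ?m"
    using m1 by (subst degree_add_eq_left) (auto simp: degree_monom_eq)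
  have r1: "{x. poly (monom (1::'a) ?m + [:-1:]) x = 0} = {x::'a. x ^ ?m = 1}"
    by (auto simp: poly_monom)
  have r2: "{x. poly (monom (1::'a) ?m + [:1:]) x = 0} = {x::'a. x ^ ?m = -1}"
    by (auto simp: poly_monom eq_neg_iff_add_eq_0)
  have n1: "monom (1::'a) ?m + [:-1:] \<noteq> 0" using d1 m1 by auto
  have n2: "monom (1::'a) ?m + [:1:] \<noteq> 0" using d2 m1 by auto
  have c1: "card {x::'a. x ^ ?m = 1} \<le> ?m"
    using card_poly_roots_bound[OF n1] d1 r1 by simp
  have c2: "card {x::'a. x ^ ?m = -1} \<le> ?m"
    using card_poly_roots_bound[OF n2] d2 r2 by simp
  have 2: "(2::'a) \<noteq> 0" by (rule basics(1)[OF assms])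
  have un: "UNIV - {0} = {x::'a. x ^ ?m = 1} \<union> {x::'a. x ^ ?m = -1}"
    using pm1[OF assms] m1 by (auto simp: power_0_left)
  have dj: "{x::'a. x ^ ?m = 1} \<inter> {x::'a. x ^ ?m = -1} = {}"
    using 2 by (auto simp: eq_neg_iff_add_eq_0)
  have "card (UNIV - {0::'a}) = 2 * ?m"
    using basics(2)[OF assms] by (simp add: card_Diff_singleton)
  then have "card {x::'a. x ^ ?m = 1} + card {x::'a. x ^ ?m = -1} = 2 * ?m"
    using un dj card_Un_disjoint[of "{x::'a. x ^ ?m = 1}" "{x::'a. x ^ ?m = -1}"] by simp
  with c1 c2 show "card {x::'a. x ^ ?m = 1} = ?m" "card {x::'a. x ^ ?m = -1} = ?m" by linarith+
qed


lemma card_fibers_le2: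
  assumes "finite A" "\<And>x. x \<in> A \<Longrightarrow> card {y\<in>A. f y = f x} \<le> 2"
  shows "card A \<le> 2 * card (f ` A)"
proof -
  have "A = (\<Union>z\<in>f ` A. {y\<in>A. f y = z})" by auto
  then have "card A \<le> (\<Sum>z\<in>f ` A. card {y\<in>A. f y = z})"
    by (metis card_UN_le assms(1) finite_imageI)
  also have "\<dots> \<le> (\<Sum>z\<in>f ` A. 2)"
    by (rule sum_mono) (use assms(2) in auto)
  finally show ?thesis by (simp add: mult.commute)
qed

lemma squares_eq:
  assumes "odd (card (UNIV :: 'a::{finite,field} set))"
  shows "{y::'a. y \<noteq> 0 \<and> (\<exists>b. b^2 = y)} = {x::'a. x ^ mm TYPE('a) = 1}"
proof -
  let ?m = "mm TYPE('a)"
  let ?Q = "{y::'a. y \<noteq> 0 \<and> (\<exists>b. b^2 = y)}"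
  have sub: "?Q \<subseteq> {x::'a. x ^ ?m = 1}"
  proof
    fix y assume "y \<in> ?Q"
    then obtain b where b: "b \<noteq> 0" "y = b^2" by auto
    have "y ^ ?m = b ^ (card (UNIV::'a set) - 1)"
      using basics(2)[OF assms] b by (simp add: power_mult[symmetric])
    with fermat_ff[OF b(1)] show "y \<in> {x::'a. x ^ ?m = 1}" by simp
  qed
  have img: "?Q = (\<lambda>b. b^2) ` (UNIV - {0})" by auto
  have "card (UNIV - {0::'a}) \<le> 2 * card ((\<lambda>b::'a. b^2) ` (UNIV - {0}))"
  proof (rule card_fibers_le2)
    fix x :: 'a assume "x \<in> UNIV - {0}"
    have "{y \<in> UNIV - {0}. y^2 = x^2} \<subseteq> {x, -x}"
      by (auto simp: power2_eq_iff)
    then have "card {y \<in> UNIV - {0}. y^2 = x^2} \<le> card {x, -x}" by (intro card_mono) simp_all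
    also have "\<dots> \<le> 2" by (simp add: card_insert_if)
    finally show "card {y \<in> UNIV - {0}. y^2 = x^2} \<le> 2" .
  qed simp
  moreover have "card (UNIV - {0::'a}) = 2 * ?m"
    using basics(2)[OF assms] by (simp add: card_Diff_singleton)
  ultimately have "card ?Q \<ge> ?m" using img by simp
  then have "card ?Q = card {x::'a. x ^ ?m = 1}"
    using cards(1)[OF assms] card_mono[OF _ sub] by simp
  then show ?thesis using card_subset_eq[OF _ sub] by simp
qed

lemma legendre_pow:
  assumes "odd (card (UNIV :: 'a::{finite,field} set))"
  shows "(legendre_ff (x::'a) = 1) = (x ^ mm TYPE('a) = 1)"
        "(legendre_ff (x::'a) = -1) = (x ^ mm TYPE('a) = -1)"
        "of_int (legendre_ff (x::'a)) = x ^ mm TYPE('a)"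
proof -
  let ?m = "mm TYPE('a)"
  have m1: "?m \<ge> 1" by (rule basics(3)[OF assms])
  have 2: "(2::'a) \<noteq> 0" by (rule basics(1)[OF assms])
  have ne: "(1::'a) \<noteq> -1" using 2 by (metis one_add_one add_eq_0_iff2 )
  have sq: "\<And>y::'a. y \<noteq> 0 \<Longrightarrow> (\<exists>b. b^2 = y) \<longleftrightarrow> y ^ ?m = 1"
    using squares_eq[OF assms] by blast
  show "(legendre_ff x = 1) = (x ^ ?m = 1)"
    "(legendre_ff x = -1) = (x ^ ?m = -1)"
    "of_int (legendre_ff x) = x ^ ?m"
    using sq[of x] pm1[OF assms, of x] m1 ne unfolding legendre_ff_def
    by (auto simp: power_0_left)
qed


lemma prod_R:
  assumes "odd (card (UNIV :: 'a::{finite,field} set))"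
  shows "(\<Prod>w\<in>{x::'a. x ^ mm TYPE('a) = 1}. d - w) = d ^ mm TYPE('a) - 1"
        "(\<Prod>w\<in>{x::'a. x ^ mm TYPE('a) = -1}. d - w) = d ^ mm TYPE('a) + 1"
proof -
  let ?m = "mm TYPE('a)"
  have m1: "?m \<ge> 1" by (rule basics(3)[OF assms])
  have d1: "degree (monom (1::'a) ?m + [:-1:]) = ?m"
    using m1 by (subst degree_add_eq_left) (auto simp: degree_monom_eq)
  have d2: "degree (monom (1::'a) ?m + [:1:]) = ?m"
    using m1 by (subst degree_add_eq_left) (auto simp: degree_monom_eq)
  have k1: "coeff (monom (1::'a) ?m + [:-1:]) ?m = 1" using m1 by (cases ?m) auto
  have k2: "coeff (monom (1::'a) ?m + [:1:]) ?m = 1" using m1 by (cases ?m) auto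
  have e1: "(\<Prod>a\<in>{x::'a. x ^ ?m = 1}. [:-a,1:]) = monom (1::'a) ?m + [:-1:]"
    by (rule prod_roots_eq) (use d1 k1 cards(1)[OF assms] in \<open>simp_all add: poly_monom\<close>)
  have e2: "(\<Prod>a\<in>{x::'a. x ^ ?m = -1}. [:-a,1:]) = monom (1::'a) ?m + [:1:]"
    by (rule prod_roots_eq) (use d2 k2 cards(2)[OF assms] in \<open>simp_all add: poly_monom\<close>)
  show "(\<Prod>w\<in>{x::'a. x ^ ?m = 1}. d - w) = d ^ ?m - 1"
    using arg_cong[OF e1, of "\<lambda>p. poly p d"] by (simp add: poly_prod poly_monom)
  show "(\<Prod>w\<in>{x::'a. x ^ ?m = -1}. d - w) = d ^ ?m + 1"
    using arg_cong[OF e2, of "\<lambda>p. poly p d"] by (simp add: poly_prod poly_monom)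
qed


lemma prod_scaled:
  fixes A :: "'a::field set"
  assumes "finite A" "card A = m" "m \<ge> 1" "\<And>d. (\<Prod>a\<in>A. d - a) = d ^ m + s"
  shows "(\<Prod>a\<in>A. c * a - e) = (-1) ^ m * (e ^ m + s * c ^ m)"
proof (cases "c = 0")
  case True
  then show ?thesis using assms(2,3) power_minus[of e m] by (simp add: power_0_left)
next
  case False
  have pt: "\<And>a. c * a - e = (-c) * (e / c - a)"
  proof -
    fix a
    have "(-c) * (e / c - a) = c * a - c * (e / c)" by (simp add: algebra_simps)
    also have "c * (e / c) = e" using False by simp
    finally show "c * a - e = (-c) * (e / c - a)" by simp
  qed
  have "(\<Prod>a\<in>A. c * a - e) = (\<Prod>a\<in>A. (-c) * (e / c - a))"
    by (simp only: pt)
  also have "\<dots> = (-c) ^ m * (\<Prod>a\<in>A. e / c - a)"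
    using assms(2) by (simp only: prod.distrib prod_constant)
  also have "\<dots> = (-c) ^ m * ((e/c) ^ m + s)"
    by (simp only: assms(4))
  also have "\<dots> = (-1) ^ m * (c ^ m * (e/c) ^ m + s * c ^ m)"
    using power_minus[of c m] by (simp add: algebra_simps)
  also have "c ^ m * (e/c) ^ m = e ^ m"
    using False by (simp add: power_mult_distrib[symmetric])
  finally show ?thesis .
qed


lemma key_pow:
  assumes "odd (card (UNIV :: 'a::{finite,field} set))" "(a::'a) \<noteq> 0"
  shows "(a * (a + 4)) ^ mm TYPE('a) = ((a + 4) / a) ^ mm TYPE('a)"
proof -
  have "a^2 \<in> {y::'a. y \<noteq> 0 \<and> (\<exists>b. b^2 = y)}" using assms(2) by auto
  then have sq: "(a^2) ^ mm TYPE('a) = 1" using squares_eq[OF assms(1)] by blast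
  have "a * (a + 4) = a^2 * ((a + 4) / a)" using assms(2) by (simp add: field_simps power2_eq_square)
  then have "(a * (a + 4)) ^ mm TYPE('a) = (a^2) ^ mm TYPE('a) * ((a + 4) / a) ^ mm TYPE('a)"
    by (simp only: power_mult_distrib)
  then show ?thesis using sq by simp
qed

lemma reindex_S:
  assumes "odd (card (UNIV :: 'a::{finite,field} set))" "(t::'a) \<noteq> 0"
  shows "(\<Prod>a\<in>{a::'a. (a * (a + 4)) ^ mm TYPE('a) = t}. c - a)
       = (\<Prod>w\<in>{w::'a. w ^ mm TYPE('a) = t} - {1}. c - 4 / (w - 1))"
proof (rule prod.reindex_bij_witness[of _ "\<lambda>w. 4 / (w - 1)" "\<lambda>a. (a + 4) / a"])
  let ?m = "mm TYPE('a)"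
  have m1: "?m \<ge> 1" by (rule basics(3)[OF assms(1)])
  have 2: "(2::'a) \<noteq> 0" by (rule basics(1)[OF assms(1)])
  have 4: "(4::'a) \<noteq> 0" using 2 by (metis mult_eq_0_iff num_double numeral_times_numeral)
  fix a assume a: "a \<in> {a::'a. (a * (a + 4)) ^ ?m = t}"
  have a0: "a \<noteq> 0" using a assms(2) m1 by (auto simp: power_0_left)
  show "4 / ((a + 4) / a - 1) = a" using a0 4 by (simp add: field_simps)
  show "(a + 4) / a \<in> {w. w ^ ?m = t} - {1}"
    using a a0 4 key_pow[OF assms(1) a0] by (auto simp: field_simps)
  show "c - 4 / ((a + 4) / a - 1) = c - a" using a0 4 by (simp add: field_simps)
next
  let ?m = "mm TYPE('a)"
  have 2: "(2::'a) \<noteq> 0" by (rule basics(1)[OF assms(1)])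
  have 4: "(4::'a) \<noteq> 0" using 2 by (metis mult_eq_0_iff num_double numeral_times_numeral)
  fix w assume w: "w \<in> {w::'a. w ^ ?m = t} - {1}"
  have w1: "w - 1 \<noteq> 0" using w by auto
  have i0: "4 / (w - 1) \<noteq> 0" using w1 4 by simp
  have jw: "(4 / (w - 1) + 4) / (4 / (w - 1)) = w" using w1 4 by (simp add: field_simps)
  show "(4 / (w - 1) + 4) / (4 / (w - 1)) = w" by (rule jw)
  show "4 / (w - 1) \<in> {a. (a * (a + 4)) ^ ?m = t}"
  proof -
    have "(4 / (w - 1) * (4 / (w - 1) + 4)) ^ ?m = ((4 / (w - 1) + 4) / (4 / (w - 1))) ^ ?m"
      by (rule key_pow[OF assms(1) i0])
    also have "\<dots> = w ^ ?m" by (simp only: jw)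
    finally show ?thesis using w by simp
  qed
qed


lemma denom:
  assumes "odd (card (UNIV :: 'a::{finite,field} set))"
  shows "(\<Prod>w\<in>{w::'a. w ^ mm TYPE('a) = 1} - {1}. w - 1) * (\<Prod>w\<in>{w::'a. w ^ mm TYPE('a) = -1}. w - 1) = 1"
proof -
  let ?m = "mm TYPE('a)"
  let ?R1 = "{w::'a. w ^ ?m = 1}" and ?R2 = "{w::'a. w ^ ?m = -1}" and ?U = "UNIV - {0::'a}"
  have m1: "?m \<ge> 1" by (rule basics(3)[OF assms])
  have 2: "(2::'a) \<noteq> 0" by (rule basics(1)[OF assms])
  have ne: "(1::'a) \<noteq> -1" using 2 by (metis one_add_one add_eq_0_iff2)
  have un: "?U = ?R1 \<union> ?R2"
    using pm1[OF assms] m1 by (auto simp: power_0_left)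
  have dj: "?R1 \<inter> ?R2 = {}" using ne by auto
  have cU: "card ?U = 2 * ?m"
    using basics(2)[OF assms] by (simp add: card_Diff_singleton)
  have "(\<Prod>y\<in>?U. 0 - y) = (\<Prod>y\<in>?R1. 0 - y) * (\<Prod>y\<in>?R2. 0 - y)"
    using un dj by (simp add: prod.union_disjoint)
  also have "\<dots> = -1" using prod_R[OF assms, of 0] m1 by (simp add: power_0_left)
  finally have a: "(\<Prod>y\<in>?U. 0 - y) = -1" .
  have e3: "(-1::'a) ^ card ?U = 1" by (rule neg_one_even_power) (simp add: cU)
  have "(\<Prod>y\<in>?U. y) = (-1) ^ card ?U * (\<Prod>y\<in>?U. y)" using e3 by simp
  also have "\<dots> = (\<Prod>y\<in>?U. (-1) * y)" by (simp only: prod.distrib prod_constant)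
  also have "\<dots> = (\<Prod>y\<in>?U. 0 - y)" by (rule prod.cong) auto
  also have "\<dots> = -1" by (rule a)
  finally have b: "(\<Prod>y\<in>?U. y) = -1" .
  have mU: "(-1::'a) \<in> ?U" by simp
  have "(\<Prod>y\<in>?U. y) = (-1) * (\<Prod>y\<in>?U - {-1}. y)"
    using prod.remove[OF _ mU, of "\<lambda>y. y"] by simp
  with b have c: "(\<Prod>y\<in>?U - {-1}. y) = 1" by simp
  have h: "\<And>b::'a. b + 1 = 0 \<Longrightarrow> b = -1" by (metis add_diff_cancel_right' diff_0)
  have r: "(\<Prod>x\<in>?U - {1}. x - 1) = (\<Prod>y\<in>?U - {-1}. y)"
    apply (rule prod.reindex_bij_witness[of _ "\<lambda>y. y + 1" "\<lambda>x. x - 1"])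
    apply (auto simp: algebra_simps)
    using h by blast
  have n1: "(1::'a) \<notin> ?R2" using ne by simp
  have st: "(?R1 - {1}) \<union> ?R2 = ?U - {1}"
  proof -
    have "(?R1 - {1}) \<union> ?R2 = (?R1 \<union> ?R2) - {1}" using n1 by blast
    then show ?thesis using un by simp
  qed
  have "(\<Prod>w\<in>?R1 - {1}. w - 1) * (\<Prod>w\<in>?R2. w - 1) = (\<Prod>x\<in>(?R1 - {1}) \<union> ?R2. x - 1)"
    by (rule prod.union_disjoint[symmetric]) (use dj in auto)
  also have "\<dots> = (\<Prod>x\<in>?U - {1}. x - 1)" by (simp only: st)
  also have "\<dots> = 1" using r c by simp
  finally show ?thesis .
qed


theorem corollary7p5:
  fixes c :: "'a::{finite,field}"
  assumes "odd (card (UNIV :: 'a set))"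
  shows "(\<Prod>a\<in>{a. legendre_ff (a * (a + 4)) = 1}. c - a)
         + (\<Prod>b\<in>{b. legendre_ff (b * (b + 4)) = -1}. c - b)
         = of_int (legendre_ff c)"
proof -
  let ?m = "mm TYPE('a)"
  let ?R1 = "{w::'a. w ^ ?m = 1}" and ?R2 = "{w::'a. w ^ ?m = -1}"
  have m1: "?m \<ge> 1" by (rule basics(3)[OF assms])
  have 2: "(2::'a) \<noteq> 0" by (rule basics(1)[OF assms])
  have 4: "(4::'a) \<noteq> 0" using 2 by (metis mult_eq_0_iff num_double numeral_times_numeral)
  have ne: "(1::'a) \<noteq> -1" using 2 by (metis one_add_one add_eq_0_iff2)
  have Sp: "{a. legendre_ff (a * (a + 4)) = 1} = {a::'a. (a * (a + 4)) ^ ?m = 1}"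
    using legendre_pow(1)[OF assms] by simp
  have Sm: "{a. legendre_ff (a * (a + 4)) = -1} = {a::'a. (a * (a + 4)) ^ ?m = -1}"
    using legendre_pow(2)[OF assms] by simp
  have R2d: "?R2 - {1} = ?R2" using ne by auto
  have P1: "(\<Prod>a\<in>{a. legendre_ff (a * (a + 4)) = 1}. c - a) = (\<Prod>w\<in>?R1 - {1}. c - 4 / (w - 1))"
    unfolding Sp by (rule reindex_S[OF assms]) simp
  have P2: "(\<Prod>a\<in>{a. legendre_ff (a * (a + 4)) = -1}. c - a) = (\<Prod>w\<in>?R2. c - 4 / (w - 1))"
    unfolding Sm using reindex_S[OF assms, of "-1" c] R2d by simp
  have pt: "\<And>w. w \<noteq> 1 \<Longrightarrow> c - 4 / (w - 1) = (c * w - (c + 4)) / (w - 1)"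
    by (simp add: field_simps)
  define N1 where "N1 = (\<Prod>w\<in>?R1 - {1}. c * w - (c + 4))"
  define D1 where "D1 = (\<Prod>w\<in>?R1 - {1}. w - 1)"
  define N2 where "N2 = (\<Prod>w\<in>?R2. c * w - (c + 4))"
  define D2 where "D2 = (\<Prod>w\<in>?R2. w - 1)"
  have Q1: "(\<Prod>w\<in>?R1 - {1}. c - 4 / (w - 1)) = N1 / D1"
  proof -
    have "(\<Prod>w\<in>?R1 - {1}. c - 4 / (w - 1)) = (\<Prod>w\<in>?R1 - {1}. (c * w - (c + 4)) / (w - 1))"
      by (rule prod.cong) (auto simp: pt)
    then show ?thesis unfolding N1_def D1_def by (simp add: prod_dividef)
  qed
  have Q2: "(\<Prod>w\<in>?R2. c - 4 / (w - 1)) = N2 / D2"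
  proof -
    have "(\<Prod>w\<in>?R2. c - 4 / (w - 1)) = (\<Prod>w\<in>?R2. (c * w - (c + 4)) / (w - 1))"
      by (rule prod.cong[OF refl], rule pt) (use ne in auto)
    then show ?thesis unfolding N2_def D2_def by (simp add: prod_dividef)
  qed
  have fin1: "finite ?R1" and fin2: "finite ?R2" by simp_all
  have N1f: "(\<Prod>w\<in>?R1. c * w - (c + 4)) = (-1) ^ ?m * ((c + 4) ^ ?m + (-1) * c ^ ?m)"
    by (rule prod_scaled[OF fin1 cards(1)[OF assms] m1]) (use prod_R(1)[OF assms] in simp)
  have N2v: "N2 = (-1) ^ ?m * ((c + 4) ^ ?m + 1 * c ^ ?m)"
    unfolding N2_def by (rule prod_scaled[OF fin2 cards(2)[OF assms] m1]) (use prod_R(2)[OF assms] in simp)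
  have D2v: "D2 = (-1) ^ ?m * (1 ^ ?m + 1 * 1 ^ ?m)"
  proof -
    have "D2 = (\<Prod>w\<in>?R2. 1 * w - 1)" unfolding D2_def by simp
    also have "\<dots> = (-1) ^ ?m * (1 ^ ?m + 1 * 1 ^ ?m)"
      by (rule prod_scaled[OF fin2 cards(2)[OF assms] m1]) (use prod_R(2)[OF assms] in simp)
    finally show ?thesis .
  qed
  have mem1: "(1::'a) \<in> ?R1" by simp
  have "(\<Prod>w\<in>?R1. c * w - (c + 4)) = (c * 1 - (c + 4)) * N1"
    unfolding N1_def by (rule prod.remove[OF fin1 mem1])
  then have N1v: "-4 * N1 = (-1) ^ ?m * ((c + 4) ^ ?m - c ^ ?m)" using N1f by simp
  have DD: "D1 * D2 = 1" unfolding D1_def D2_def by (rule denom[OF assms])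
  define P :: 'a where "P = (-1) ^ ?m"
  have PP: "P * P = 1" unfolding P_def by (simp add: power_mult_distrib[symmetric])
  have D2v': "D2 = 2 * P" using D2v unfolding P_def by simp
  have P0: "P \<noteq> 0" using PP by auto
  have D1v: "D1 = 1 / (2 * P)" using DD D2v' P0 2 by (simp add: field_simps)
  have "N1 / D1 + N2 / D2 = c ^ ?m"
  proof -
    have e1: "N1 / D1 = N1 * (2 * P)" using D1v P0 2 by simp
    have N1': "N1 = - (P * ((c + 4) ^ ?m - c ^ ?m)) / 4"
      using N1v 4 unfolding P_def by (simp add: field_simps)
    have e2: "N1 * (2 * P) = - (P * P) * ((c + 4) ^ ?m - c ^ ?m) / 2"
      unfolding N1' using 4 2 by (simp add: field_simps)
    have e3: "N2 / D2 = ((c + 4) ^ ?m + c ^ ?m) / 2"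
      using N2v D2v' P0 2 unfolding P_def by (simp add: field_simps)
    have "N1 / D1 + N2 / D2 = - ((c + 4) ^ ?m - c ^ ?m) / 2 + ((c + 4) ^ ?m + c ^ ?m) / 2"
      by (simp only: e1 e2 e3 PP) simp
    also have "\<dots> = (2 * c ^ ?m) / 2" by (simp add: add_divide_distrib[symmetric] algebra_simps)
    also have "\<dots> = c ^ ?m" using 2 by simp
    finally show ?thesis .
  qed
  then show ?thesis using P1 P2 Q1 Q2 legendre_pow(3)[OF assms, of c] by simp
qed

end
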